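(* Suppose $\mathcal{D}(\cdot)$ is a location-scale family on a convex set $\Theta\subseteq\mathbb{R}^d$, $z_\theta\sim\mathcal{D}(\theta)\iff z_\theta\overset{d}{=}(\Sigma_0+\Sigma(\theta))z_0+\mu_0+\mu\theta$, such that $\Sigma_0+\Sigma(\theta)$ has full rank for all $\theta\in\Theta$. Then $\mathcal{D}(\alpha\theta+(1-\alpha)\theta')\leq_{cx}\alpha\mathcal{D}(\theta)+(1-\alpha)\mathcal{D}(\theta')$ for all $\theta,\theta'\in\Theta$ and $\alpha\in(0,1)$.
   Context: Location-scale family: $z_0\sim\mathcal{D}_0$ is drawn from a fixed zero-mean distribution $\mathcal{D}_0$ on $\mathbb{R}^m$, $\Sigma_0\in\mathbb{R}^{m\times m}$, $\mu_0\in\mathbb{R}^m$ fixed, $\mu:\mathbb{R}^d\to\mathbb{R}^m$ and $\Sigma:\mathbb{R}^d\to\mathbb{R}^{m\times m}$ linear maps. For distributions $\mathcal{D}_1,\mathcal{D}_2$ on $\mathbb{R}^m$, $\mathcal{D}_1\leq_{cx}\mathcal{D}_2$ means $\mathbb{E}_{z\sim\mathcal{D}_1}g(z)\leq\mathbb{E}_{z\sim\mathcal{D}_2}g(z)$ for every convex $g:\mathbb{R}^m\to\mathbb{R}$. $\alpha\mathcal{D}(\theta)+(1-\alpha)\mathcal{D}(\theta')$ denotes the mixture distribution. *)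

theory Defs
  imports "HOL-Probability.Probability"
begin

text \<open>Extended-real expectation of a real function: positive part minus negative part.
  For convex g and distributions with finite mean this is well defined in (-inf, +inf].\<close>
definition ext_expect :: "'a measure \<Rightarrow> ('a \<Rightarrow> real) \<Rightarrow> ereal" where
  "ext_expect M g =
     enn2ereal (\<integral>\<^sup>+ x. ennreal (g x) \<partial>M) - enn2ereal (\<integral>\<^sup>+ x. ennreal (- g x) \<partial>M)"

definition cx_le :: "('a::real_vector) measure \<Rightarrow> 'a measure \<Rightarrow> bool" where
  "cx_le M N \<longleftrightarrow> (\<forall>g::'a \<Rightarrow> real. convex_on UNIV g \<longrightarrow> ext_expect M g \<le> ext_expect N g)"

definition mixture :: "real \<Rightarrow> 'a measure \<Rightarrow> 'a measure \<Rightarrow> 'a measure" where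
  "mixture a M N = measure_of (space M) (sets M)
     (\<lambda>A. ennreal a * emeasure M A + ennreal (1 - a) * emeasure N A)"

definition loc_scale ::
  "(real^'m) measure \<Rightarrow> real^'m^'m \<Rightarrow> (real^'d \<Rightarrow> real^'m^'m) \<Rightarrow> real^'m \<Rightarrow> (real^'d \<Rightarrow> real^'m)
   \<Rightarrow> real^'d \<Rightarrow> (real^'m) measure" where
  "loc_scale D0 Sigma0 Sig mu0 mu \<theta> =
     distr D0 borel (\<lambda>z. (Sigma0 + Sig \<theta>) *v z + mu0 + mu \<theta>)"

end

theory Submission
  imports Defs
begin

lemma mixture_sets: "sets (mixture a M N) = sets M" "space (mixture a M N) = space M"
  unfolding mixture_def by (simp_all add: sets.sets_measure_of_eq sets.space_measure_of_eq)

lemma mixture_emeasure: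
  assumes "sets N = sets M" "A \<in> sets M"
  shows "emeasure (mixture a M N) A = ennreal a * emeasure M A + ennreal (1 - a) * emeasure N A"
  unfolding mixture_def
proof (rule emeasure_measure_of_sigma)
  show "sigma_algebra (space M) (sets M)" by (rule sets.sigma_algebra_axioms)
  show "positive (sets M) (\<lambda>A. ennreal a * emeasure M A + ennreal (1 - a) * emeasure N A)"
    by (simp add: positive_def)
  show "countably_additive (sets M) (\<lambda>A. ennreal a * emeasure M A + ennreal (1 - a) * emeasure N A)"
    unfolding countably_additive_def
  proof (intro allI impI)
    fix A :: "nat \<Rightarrow> _" assume h: "range A \<subseteq> sets M" "disjoint_family A" "\<Union> (range A) \<in> sets M"
    have "range A \<subseteq> sets N" using h assms by simp
    then show "(\<Sum>i. ennreal a * emeasure M (A i) + ennreal (1 - a) * emeasure N (A i)) =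
         ennreal a * emeasure M (\<Union> (range A)) + ennreal (1 - a) * emeasure N (\<Union> (range A))"
      using h by (simp add: suminf_add[symmetric] suminf_emeasure)
  qed
qed (rule assms)


lemma meas_mix:
  assumes "sets N = sets M" "f \<in> borel_measurable M"
  shows "f \<in> borel_measurable N" "f \<in> borel_measurable (mixture a M N)"
  using assms measurable_cong_sets[OF assms(1) refl, of borel] measurable_cong_sets[OF mixture_sets(1)[of a M N] refl, of borel]
  by auto

lemma nn_integral_mixture:
  assumes MN: "sets N = sets M" and f: "f \<in> borel_measurable M"
  shows "nn_integral (mixture a M N) f = ennreal a * nn_integral M f + ennreal (1 - a) * nn_integral N f"
  using f
proof induction
  case (cong f g)
  have "space N = space M" using assms(1) by (rule sets_eq_imp_space_eq)
  then have "nn_integral N f = nn_integral N g" "nn_integral M f = nn_integral M g"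
     "nn_integral (mixture a M N) f = nn_integral (mixture a M N) g"
    using cong(3) by (auto simp: mixture_sets intro!: nn_integral_cong)
  thus ?case using cong(4) by simp
next
  case (set A)
  have "A \<in> sets N" using set MN by simp
  have "A \<in> sets (mixture a M N)" using set by (simp add: mixture_sets)
  then show ?case using set \<open>A \<in> sets N\<close>
    using mixture_emeasure[OF MN set(1)] by (simp only: nn_integral_indicator)
next
  case (mult f c)
  note m = meas_mix[OF MN mult(2)]
  have "nn_integral (mixture a M N) (\<lambda>x. c * f x) = c * nn_integral (mixture a M N) f"
    "nn_integral M (\<lambda>x. c * f x) = c * nn_integral M f"
    "nn_integral N (\<lambda>x. c * f x) = c * nn_integral N f"
    using m mult(2) by (simp_all add: nn_integral_cmult)
  then show ?case using mult(4) by (simp add: algebra_simps)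
next
  case (add f g)
  have fm: "f \<in> borel_measurable M" "g \<in> borel_measurable M" using add by blast+
  have ih: "nn_integral (mixture a M N) f = ennreal a * nn_integral M f + ennreal (1 - a) * nn_integral N f"
     "nn_integral (mixture a M N) g = ennreal a * nn_integral M g + ennreal (1 - a) * nn_integral N g"
    using add by blast+
  note m1 = meas_mix[OF MN fm(1)] and m2 = meas_mix[OF MN fm(2)]
  have "nn_integral (mixture a M N) (\<lambda>x. g x + f x) = nn_integral (mixture a M N) g + nn_integral (mixture a M N) f"
    "nn_integral M (\<lambda>x. g x + f x) = nn_integral M g + nn_integral M f"
    "nn_integral N (\<lambda>x. g x + f x) = nn_integral N g + nn_integral N f"
    using m1 m2 fm by (simp_all add: nn_integral_add)
  then show ?case using ih by (simp add: algebra_simps)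
next
  case (seq U)
  have fm: "\<And>i. U i \<in> borel_measurable M" "incseq U" using seq by blast+
  have ih: "\<And>i. nn_integral (mixture a M N) (U i) = ennreal a * nn_integral M (U i) + ennreal (1 - a) * nn_integral N (U i)"
    using seq by blast
  note m = meas_mix[OF MN fm(1)]
  have eq: "(SUP i. U i) = (\<lambda>x. SUP i. U i x)" by (rule ext) (simp add: SUP_apply image_comp)
  have "nn_integral (mixture a M N) (Sup (range U)) = (SUP i. nn_integral (mixture a M N) (U i))"
    by (simp only: eq) (rule nn_integral_monotone_convergence_SUP[OF fm(2) m(2)])
  also have "... = (SUP i. ennreal a * nn_integral M (U i) + ennreal (1 - a) * nn_integral N (U i))"
    using ih by simp
  also have "... = ennreal a * (SUP i. nn_integral M (U i)) + ennreal (1 - a) * (SUP i. nn_integral N (U i))"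
  proof -
    have i1: "incseq (\<lambda>i. ennreal a * nn_integral M (U i))" "incseq (\<lambda>i. ennreal (1 - a) * nn_integral N (U i))"
      using fm(2) unfolding incseq_def
      by (auto intro!: mult_left_mono nn_integral_mono simp: le_fun_def)
    show ?thesis
      by (simp only: ennreal_SUP_add[OF i1] SUP_mult_left_ennreal)
  qed
  also have "... = ennreal a * nn_integral M (Sup (range U)) + ennreal (1 - a) * nn_integral N (Sup (range U))"
    by (simp only: eq nn_integral_monotone_convergence_SUP[OF fm(2) m(1)] nn_integral_monotone_convergence_SUP[OF fm(2) fm(1)])
  finally show ?case .
qed

lemma convex_affine_minorant:
  fixes g :: "'a::euclidean_space \<Rightarrow> real"
  assumes cvx: "convex_on UNIV g"
  obtains c d where "\<And>x. c \<bullet> x + d \<le> g x"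
proof -
  have cont: "continuous_on UNIV g" using convex_on_continuous[OF open_UNIV cvx] .
  let ?E = "epigraph UNIV g"
  have cE: "convex ?E" using cvx by (rule convex_epigraphI)
  have "?E = {xy. g (fst xy) - snd xy \<le> 0}" by (auto simp: epigraph_def)
  moreover have "closed {xy::'a\<times>real. g (fst xy) - snd xy \<le> 0}"
  proof (rule closed_Collect_le)
    show "continuous_on UNIV (\<lambda>xy::'a\<times>real. g (fst xy) - snd xy)"
      by (intro continuous_intros continuous_on_compose2[OF cont]) auto
  qed (rule continuous_on_const)
  ultimately have clE: "closed ?E" by simp
  have "(0, g 0 - 1) \<notin> ?E" by (simp add: mem_epigraph)
  then obtain a b where ab: "inner a (0::'a, g 0 - 1) < b" "\<forall>x\<in>?E. inner a x > b"
    using separating_hyperplane_closed_point[OF cE clE] by blast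
  obtain a1 a2 where a: "a = (a1, a2)" by (cases a)
  have h: "a1 \<bullet> x + a2 * t > b" if "g x \<le> t" for x t
  proof -
    have "(x, t) \<in> ?E" using that by (simp add: mem_epigraph)
    then have "b < inner a (x, t)" using ab(2) by blast
    then show ?thesis by (simp add: a)
  qed
  have h0: "a2 * (g 0 - 1) < b" using ab(1) by (simp add: a)
  have "a2 * g 0 > b" using h[of 0 "g 0"] by simp
  with h0 have a2: "a2 > 0" by (simp add: algebra_simps)
  show thesis
  proof (rule that[of "-(1/a2) *\<^sub>R a1" "b/a2"])
    fix x
    have "b < a1 \<bullet> x + a2 * g x" using h[of x "g x"] by simp
    then show "(-(1/a2) *\<^sub>R a1) \<bullet> x + b / a2 \<le> g x"
      using a2 by (simp add: field_simps)
  qed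
qed

lemma ptw_ineq:
  fixes u v w a :: real
  assumes "u \<le> a * v + (1-a) * w" "0 \<le> a" "a \<le> 1"
  shows "ennreal u + ennreal a * ennreal (-v) + ennreal (1-a) * ennreal (-w)
     \<le> ennreal (-u) + ennreal a * ennreal v + ennreal (1-a) * ennreal w"
proof -
  have e: "\<And>x. ennreal (max x 0) = ennreal x" by (simp add: max_def ennreal_neg)
  have s: "\<And>x y z. ennreal (max x 0 + a * max y 0 + (1-a) * max z 0) = ennreal x + ennreal a * ennreal y + ennreal (1-a) * ennreal z"
    using assms(2,3) by (simp add: ennreal_mult e)
  have "ennreal u + ennreal a * ennreal (-v) + ennreal (1-a) * ennreal (-w)
     = ennreal (max u 0 + a * max (-v) 0 + (1-a) * max (-w) 0)"
    by (rule s[symmetric])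
  also have "... \<le> ennreal (max (-u) 0 + a * max v 0 + (1-a) * max w 0)"
  proof (rule ennreal_leI)
    have "a * v = a * max v 0 - a * max (-v) 0" "(1-a) * w = (1-a) * max w 0 - (1-a) * max (-w) 0"
      by (auto simp: max_def algebra_simps)
    moreover have "u = max u 0 - max (-u) 0" by (auto simp: max_def)
    ultimately show "max u 0 + a * max (-v) 0 + (1-a) * max (-w) 0 \<le> max (-u) 0 + a * max v 0 + (1-a) * max w 0"
      using assms(1) by linarith
  qed
  also have "... = ennreal (-u) + ennreal a * ennreal v + ennreal (1-a) * ennreal w"
    by (rule s)
  finally show ?thesis .
qed

lemma ereal_fin:
  fixes P N Qp Qm :: ennreal
  assumes "N < top" "Qm < top" "P + Qm \<le> N + Qp"
  shows "enn2ereal P - enn2ereal N \<le> enn2ereal Qp - enn2ereal Qm"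
proof -
  obtain n where n: "N = ennreal n" "0 \<le> n" using assms(1) by (cases N) auto
  obtain q where q: "Qm = ennreal q" "0 \<le> q" using assms(2) by (cases Qm) auto
  show ?thesis
  proof (cases P)
    case (real p)
    show ?thesis
    proof (cases Qp)
      case (real r)
      have "ennreal (p + q) \<le> ennreal (n + r)"
        using assms(3) n q \<open>P = ennreal p\<close> \<open>0 \<le> p\<close> real by simp
      then have "p + q \<le> n + r" using n real by (subst (asm) ennreal_le_iff) auto
      then show ?thesis using n q real \<open>P = ennreal p\<close> \<open>0 \<le> p\<close> by simp
    next
      case top then show ?thesis using n q by simp
    qed
  next
    case top
    then have "Qp = top" using assms(3) n by (auto simp: top_unique ennreal_plus[symmetric] simp del: ennreal_plus)
    then show ?thesis using q by simp
  qed
qed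


theorem propositionA1:
  fixes D0 :: "(real^'m) measure"
    and Sigma0 :: "real^'m^'m" and Sig :: "real^'d \<Rightarrow> real^'m^'m"
    and mu0 :: "real^'m" and mu :: "real^'d \<Rightarrow> real^'m"
    and \<Theta> :: "(real^'d) set"
  assumes "prob_space D0"
    and "sets D0 = sets borel"
    and "integrable D0 (\<lambda>z. z)"
    and "(\<integral>z. z \<partial>D0) = 0"
    and "linear Sig" and "linear mu"
    and "convex \<Theta>"
    and "\<And>\<theta>. \<theta> \<in> \<Theta> \<Longrightarrow> invertible (Sigma0 + Sig \<theta>)"
    and "\<theta> \<in> \<Theta>" and "\<theta>' \<in> \<Theta>" and "0 < \<alpha>" and "\<alpha> < 1"
  shows "cx_le (loc_scale D0 Sigma0 Sig mu0 mu (\<alpha> *\<^sub>R \<theta> + (1 - \<alpha>) *\<^sub>R \<theta>'))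
           (mixture \<alpha> (loc_scale D0 Sigma0 Sig mu0 mu \<theta>) (loc_scale D0 Sigma0 Sig mu0 mu \<theta>'))"
proof -
  note ps = assms(1) and sD = assms(2) and intz = assms(3) and linS = assms(5) and linm = assms(6)
  define f where "f t z = (Sigma0 + Sig t) *v z + mu0 + mu t" for t z
  define ta where "ta = \<alpha> *\<^sub>R \<theta> + (1 - \<alpha>) *\<^sub>R \<theta>'"
  have LS: "loc_scale D0 Sigma0 Sig mu0 mu t = distr D0 borel (f t)" for t
    unfolding loc_scale_def f_def ..
  have fcomb: "f ta z = \<alpha> *\<^sub>R f \<theta> z + (1 - \<alpha>) *\<^sub>R f \<theta>' z" for z
  proof -
    have e1: "Sig ta = \<alpha> *\<^sub>R Sig \<theta> + (1 - \<alpha>) *\<^sub>R Sig \<theta>'"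
      unfolding ta_def using linS by (simp add: linear_add linear_cmul)
    have e2: "mu ta = \<alpha> *\<^sub>R mu \<theta> + (1 - \<alpha>) *\<^sub>R mu \<theta>'"
      unfolding ta_def using linm by (simp add: linear_add linear_cmul)
    have e3: "Sigma0 = \<alpha> *\<^sub>R Sigma0 + (1 - \<alpha>) *\<^sub>R Sigma0"
      by (simp add: scaleR_left_distrib[symmetric])
    show ?thesis
      unfolding f_def e1 e2 by (subst e3) (simp add: matrix_vector_mult_add_rdistrib scaleR_matrix_vector_assoc[symmetric] algebra_simps)
  qed
  have fmeas[measurable]: "f t \<in> borel_measurable D0" for t
  proof -
    have "continuous_on UNIV (f t)" unfolding f_def
      by (intro continuous_intros linear_continuous_on matrix_vector_mul_bounded_linear)
    then have "f t \<in> borel_measurable borel" by (rule borel_measurable_continuous_onI)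
    then show ?thesis by (subst measurable_cong_sets[OF sD refl])
  qed
  have sLS: "sets (loc_scale D0 Sigma0 Sig mu0 mu t) = sets borel" for t
    by (simp add: LS)
  show ?thesis
    unfolding cx_le_def
  proof (intro allI impI)
    fix g :: "real^'m \<Rightarrow> real"
    assume cg: "convex_on UNIV g"
    have gc: "continuous_on UNIV g" using convex_on_continuous[OF open_UNIV cg] .
    have gm[measurable]: "g \<in> borel_measurable borel" using gc by (rule borel_measurable_continuous_onI)
    obtain c d where cd: "\<And>x. c \<bullet> x + d \<le> g x" using convex_affine_minorant[OF cg] by blast
    define P where "P t = (\<integral>\<^sup>+ z. ennreal (g (f t z)) \<partial>D0)" for t
    define N where "N t = (\<integral>\<^sup>+ z. ennreal (- g (f t z)) \<partial>D0)" for t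
    have gfm: "(\<lambda>z. g (f t z)) \<in> borel_measurable D0" for t
      using measurable_compose[OF fmeas gm] by simp
    have EE: "ext_expect (loc_scale D0 Sigma0 Sig mu0 mu t) g = enn2ereal (P t) - enn2ereal (N t)" for t
      unfolding ext_expect_def LS P_def N_def
      using fmeas by (simp add: nn_integral_distr)
    have Nfin: "N t < top" for t
    proof -
      interpret prob_space D0 by (rule ps)
      have "integrable D0 (\<lambda>z. (c v* (Sigma0 + Sig t)) \<bullet> z + (c \<bullet> (mu0 + mu t) + d))"
      proof (rule Bochner_Integration.integrable_add)
        show "integrable D0 (\<lambda>z. (c v* (Sigma0 + Sig t)) \<bullet> z)"
          by (rule integrable_inner_right) (rule intz)
      qed simp
      moreover have "(\<lambda>z. (c v* (Sigma0 + Sig t)) \<bullet> z + (c \<bullet> (mu0 + mu t) + d)) = (\<lambda>z. c \<bullet> f t z + d)"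
        by (rule ext) (simp add: f_def dot_lmul_matrix inner_add_right)
      ultimately have ih: "integrable D0 (\<lambda>z. c \<bullet> f t z + d)" by simp
      have "N t \<le> (\<integral>\<^sup>+ z. ennreal (norm (c \<bullet> f t z + d)) \<partial>D0)"
        unfolding N_def
      proof (rule nn_integral_mono, rule ennreal_leI)
        fix z show "- g (f t z) \<le> norm (c \<bullet> f t z + d)" using cd[of "f t z"] by simp
      qed
      also have "... < \<infinity>" using ih by (simp add: integrable_iff_bounded)
      finally show ?thesis by simp
    qed
    have EM: "ext_expect (mixture \<alpha> (loc_scale D0 Sigma0 Sig mu0 mu \<theta>) (loc_scale D0 Sigma0 Sig mu0 mu \<theta>')) g
       = enn2ereal (ennreal \<alpha> * P \<theta> + ennreal (1 - \<alpha>) * P \<theta>') - enn2ereal (ennreal \<alpha> * N \<theta> + ennreal (1 - \<alpha>) * N \<theta>')"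
      unfolding ext_expect_def
      by (subst (1 2) nn_integral_mixture) (simp_all add: sLS LS P_def N_def nn_integral_distr fmeas)
    have cvg: "g (\<alpha> *\<^sub>R x + (1-\<alpha>) *\<^sub>R y) \<le> \<alpha> * g x + (1-\<alpha>) * g y" for x y
      using convex_onD[OF cg, of "1-\<alpha>" x y] assms(11,12) by simp
    have pt: "ennreal (g (f ta z)) + ennreal \<alpha> * ennreal (- g (f \<theta> z)) + ennreal (1-\<alpha>) * ennreal (- g (f \<theta>' z))
     \<le> ennreal (- g (f ta z)) + ennreal \<alpha> * ennreal (g (f \<theta> z)) + ennreal (1-\<alpha>) * ennreal (g (f \<theta>' z))" for z
      by (rule ptw_ineq) (use assms(11,12) cvg[of "f \<theta> z" "f \<theta>' z"] fcomb[of z] in auto)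
    have int_eq: "(\<integral>\<^sup>+ z. ennreal (h1 z) + ennreal \<alpha> * ennreal (h2 z) + ennreal (1-\<alpha>) * ennreal (h3 z) \<partial>D0)
       = (\<integral>\<^sup>+ z. ennreal (h1 z) \<partial>D0) + (ennreal \<alpha> * (\<integral>\<^sup>+ z. ennreal (h2 z) \<partial>D0) + ennreal (1-\<alpha>) * (\<integral>\<^sup>+ z. ennreal (h3 z) \<partial>D0))"
      if [measurable]: "h1 \<in> borel_measurable D0" "h2 \<in> borel_measurable D0" "h3 \<in> borel_measurable D0" for h1 h2 h3
      by (simp add: nn_integral_add nn_integral_cmult add.assoc)
    have key: "P ta + (ennreal \<alpha> * N \<theta> + ennreal (1 - \<alpha>) * N \<theta>') \<le> N ta + (ennreal \<alpha> * P \<theta> + ennreal (1 - \<alpha>) * P \<theta>')"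
    proof -
      have gfm': "(\<lambda>z. - g (f t z)) \<in> borel_measurable D0" for t
        using gfm[of t] by measurable
      have "(\<integral>\<^sup>+ z. ennreal (g (f ta z)) + ennreal \<alpha> * ennreal (- g (f \<theta> z)) + ennreal (1-\<alpha>) * ennreal (- g (f \<theta>' z)) \<partial>D0)
        \<le> (\<integral>\<^sup>+ z. ennreal (- g (f ta z)) + ennreal \<alpha> * ennreal (g (f \<theta> z)) + ennreal (1-\<alpha>) * ennreal (g (f \<theta>' z)) \<partial>D0)"
        by (rule nn_integral_mono) (rule pt)
      then show ?thesis
        unfolding P_def N_def
        int_eq[of "\<lambda>z. g (f ta z)" "\<lambda>z. - g (f \<theta> z)" "\<lambda>z. - g (f \<theta>' z)", OF gfm gfm' gfm']
        int_eq[of "\<lambda>z. - g (f ta z)" "\<lambda>z. g (f \<theta> z)" "\<lambda>z. g (f \<theta>' z)", OF gfm' gfm gfm]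
        .
    qed
    show "ext_expect (loc_scale D0 Sigma0 Sig mu0 mu (\<alpha> *\<^sub>R \<theta> + (1 - \<alpha>) *\<^sub>R \<theta>')) g
       \<le> ext_expect (mixture \<alpha> (loc_scale D0 Sigma0 Sig mu0 mu \<theta>) (loc_scale D0 Sigma0 Sig mu0 mu \<theta>')) g"
      unfolding EM ta_def[symmetric] EE[of ta]
      by (rule ereal_fin[OF Nfin _ key]) (simp add: Nfin ennreal_mult_less_top)
  qed
qed
end
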